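(* Let $Q=ABCD$ be any non-degenerate quadrangle of perimeter $2$ (convex, non-convex or self-intersecting) and $Q^\circ=KLMN$ its dual. Then $|AC|=|KM|$ and $|BD|=|LN|$.
   Context: Identify $\mathbb{R}^2$ with $\mathbb{C}$. A quadrangle $Q=ABCD$ is an ordered 4-tuple of points $A,B,C,D\in\mathbb{C}$: $A$ is the first vertex and the order $A\to B\to C\to D\to A$ is the direction of traversal. Its edge vectors are $z_1=B-A$, $z_2=C-B$, $z_3=D-C$, $z_4=A-D$, so $z_1+z_2+z_3+z_4=0$; its perimeter is $|z_1|+|z_2|+|z_3|+|z_4|$. $Q$ is non-degenerate if each pair of consecutive edge vectors $(z_1,z_2),(z_2,z_3),(z_3,z_4),(z_4,z_1)$ consists of nonzero, non-collinear vectors. Associated plane: for a non-degenerate $Q$ of perimeter $2$, choose $u_1,\dots,u_4\in\mathbb{C}$ with $u_k^2=z_k$, where $u_1$ is an arbitrary square root of $z_1$ and for $k=1,2,3$ the sign of $u_{k+1}$ is chosen so that $\operatorname{Im}(\overline{u_k}u_{k+1})$ has the same sign as $\operatorname{Im}(\overline{z_k}z_{k+1})$. Write $u_k=a_k+i b_k$ and $\bar a=(a_1,a_2,a_3,a_4)$, $\bar b=(b_1,b_2,b_3,b_4)$; these are orthonormal in $\mathbb{R}^4$. Let $\Pi=\operatorname{span}(\bar a,\bar b)$ and $\Pi^\perp$ its orthogonal complement. Dual quadrangle: choose an orthonormal basis $(\bar c,\bar d)$ of $\Pi^\perp$, put $w_k=(c_k+i d_k)^2$; then $\sum_k w_k=0$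 and $\sum_k|w_k|=2$. The dual quadrangle $Q^\circ=KLMN$ is the quadrangle with $L-K=w_1$, $M-L=w_2$, $N-M=w_3$, $K-N=w_4$. It is determined up to rotation, reflection and translation. *)

theory Defs
  imports "HOL-Analysis.Analysis"
begin

definition qedge :: "complex \<Rightarrow> complex \<Rightarrow> complex \<Rightarrow> complex \<Rightarrow> nat \<Rightarrow> complex" where
  "qedge A B C D k =
     (if k = 1 then B - A else if k = 2 then C - B else if k = 3 then D - C else A - D)"

definition nxt :: "nat \<Rightarrow> nat" where
  "nxt k = k mod 4 + 1"

definition perimeter :: "complex \<Rightarrow> complex \<Rightarrow> complex \<Rightarrow> complex \<Rightarrow> real" where
  "perimeter A B C D = (\<Sum>k\<in>{1..4}. norm (qedge A B C D k))"

definition nondegenerate :: "complex \<Rightarrow> complex \<Rightarrow> complex \<Rightarrow> complex \<Rightarrow> bool" where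
  "nondegenerate A B C D =
     (\<forall>k\<in>{1..4}. qedge A B C D k \<noteq> 0 \<and> qedge A B C D (nxt k) \<noteq> 0 \<and>
        \<not> collinear {0, qedge A B C D k, qedge A B C D (nxt k)})"

definition inner4 :: "(nat \<Rightarrow> real) \<Rightarrow> (nat \<Rightarrow> real) \<Rightarrow> real" where
  "inner4 x y = (\<Sum>k\<in>{1..4}. x k * y k)"

text \<open>Admissible choice of square roots u_1..u_4 of the edge vectors
  (u_1 arbitrary, signs of u_2,u_3,u_4 fixed by the orientation condition).\<close>
definition admissible_roots :: "complex \<Rightarrow> complex \<Rightarrow> complex \<Rightarrow> complex \<Rightarrow> (nat \<Rightarrow> complex) \<Rightarrow> bool" where
  "admissible_roots A B C D u =
     ((\<forall>k\<in>{1..4}. (u k)\<^sup>2 = qedge A B C D k) \<and>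
      (\<forall>k\<in>{1..3}. sgn (Im (cnj (u k) * u (k + 1))) =
                   sgn (Im (cnj (qedge A B C D k) * qedge A B C D (k + 1)))))"

text \<open>KLMN is a dual quadrangle of ABCD: for some admissible roots u (with
  a = Re u, b = Im u spanning the plane Pi) and some orthonormal basis (c,d) of the
  orthogonal complement of Pi, the edges of KLMN are w_k = (c_k + i d_k)^2.\<close>
definition is_dual :: "complex \<Rightarrow> complex \<Rightarrow> complex \<Rightarrow> complex \<Rightarrow>
                       complex \<Rightarrow> complex \<Rightarrow> complex \<Rightarrow> complex \<Rightarrow> bool" where
  "is_dual A B C D K L M N =
     (\<exists>u c d. admissible_roots A B C D u \<and>
        (let a = (\<lambda>k. Re (u k)); b = (\<lambda>k. Im (u k));
             w = (\<lambda>k. (Complex (c k) (d k))\<^sup>2) in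
         inner4 c a = 0 \<and> inner4 c b = 0 \<and> inner4 d a = 0 \<and> inner4 d b = 0 \<and>
         inner4 c c = 1 \<and> inner4 d d = 1 \<and> inner4 c d = 0 \<and>
         L - K = w 1 \<and> M - L = w 2 \<and> N - M = w 3 \<and> K - N = w 4))"

end

theory Submission imports Defs begin
lemma rows:
  fixes M :: "nat \<Rightarrow> nat \<Rightarrow> real"
  assumes "\<And>i j. i \<in> {1..4} \<Longrightarrow> j \<in> {1..4} \<Longrightarrow> (\<Sum>k\<in>{1..4}. M k i * M k j) = (if i = j then 1 else 0)"
  shows "\<And>i j. i \<in> {1..4} \<Longrightarrow> j \<in> {1..4} \<Longrightarrow> (\<Sum>k\<in>{1..4}. M i k * M j k) = (if i = j then 1 else 0)"
proof -
  define ix :: "4 \<Rightarrow> nat" where "ix i = (if i = 1 then 1 else if i = 2 then 2 else if i = 3 then 3 else 4)" for i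
  have d: "(1::4) \<noteq> 2" "(1::4) \<noteq> 3" "(1::4) \<noteq> 4" "(2::4) \<noteq> 3" "(2::4) \<noteq> 4" "(3::4) \<noteq> 4" by simp_all
  define Q :: "real^4^4" where "Q = (\<chi> i j. M (ix i) (ix j))"
  have s4: "(\<Sum>k\<in>{1..4::nat}. f k) = f 1 + f 2 + f 3 + f 4" for f :: "nat \<Rightarrow> real"
    by (simp add: numeral_eq_Suc)
  have s4': "(\<Sum>k\<in>{Suc 0..4::nat}. f k) = f 1 + f 2 + f 3 + f 4" for f :: "nat \<Rightarrow> real"
    by (simp add: numeral_eq_Suc)
  have "transpose Q ** Q = mat 1"
    unfolding vec_eq_iff forall_4 matrix_matrix_mult_def transpose_def mat_def Q_def
    using assms[of 1 1] assms[of 1 2] assms[of 1 3] assms[of 1 4] assms[of 2 1] assms[of 2 2] assms[of 2 3] assms[of 2 4]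
     assms[of 3 1] assms[of 3 2] assms[of 3 3] assms[of 3 4] assms[of 4 1] assms[of 4 2] assms[of 4 3] assms[of 4 4]
    by (simp add: sum_4 ix_def d d[symmetric] s4 s4')
  hence T: "Q ** transpose Q = mat 1" by (simp add: matrix_left_right_inverse)
  fix i j :: nat assume ij: "i \<in> {1..4}" "j \<in> {1..4}"
  have all: "\<forall>i\<in>{1..4::nat}. P i" if "P 1" "P 2" "P 3" "P 4" for P
    using that by (auto simp: numeral_eq_Suc le_Suc_eq)
  have "\<forall>i\<in>{1..4::nat}. \<forall>j\<in>{1..4::nat}. (\<Sum>k\<in>{1..4}. M i k * M j k) = (if i = j then 1 else 0)"
    using T unfolding vec_eq_iff forall_4 matrix_matrix_mult_def transpose_def mat_def Q_def
    by (intro all ballI) (simp_all add: sum_4 ix_def d d[symmetric] s4 s4')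
  thus "(\<Sum>k\<in>{1..4}. M i k * M j k) = (if i = j then 1 else 0)" using ij by blast
qed
lemma cm2: "(cmod z)^2 = (Re z)^2 + (Im z)^2" by (simp add: cmod_def)
lemma keyid: "(cmod ((Complex a1 b1)^2 + (Complex a2 b2)^2))^2 =
   ((a1^2+b1^2)+(a2^2+b2^2))^2 - 4*((a1^2+b1^2)*(a2^2+b2^2) - (a1*a2+b1*b2)^2)"
  unfolding cm2 by (simp add: power2_eq_square algebra_simps)
lemma key:
  fixes a1 b1 c1 d1 a2 b2 c2 d2 :: real
  assumes "a1^2+b1^2+c1^2+d1^2 = 1" "a2^2+b2^2+c2^2+d2^2 = 1" "a1*a2+b1*b2+c1*c2+d1*d2 = 0"
  shows "cmod ((Complex a1 b1)^2 + (Complex a2 b2)^2) = cmod ((Complex c1 d1)^2 + (Complex c2 d2)^2)"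
proof -
  have e1: "c1^2+d1^2 = 1 - (a1^2+b1^2)" "c2^2+d2^2 = 1 - (a2^2+b2^2)" "c1*c2+d1*d2 = -(a1*a2+b1*b2)"
    using assms by linarith+
  have "(cmod ((Complex a1 b1)^2 + (Complex a2 b2)^2))^2 = (cmod ((Complex c1 d1)^2 + (Complex c2 d2)^2))^2"
    unfolding keyid e1 by (simp add: algebra_simps power2_eq_square)
  thus ?thesis by (simp add: power2_eq_iff_nonneg)
qed

theorem mainTheorem11:
  fixes A B C D K L M N :: complex
  assumes "nondegenerate A B C D"
    and "perimeter A B C D = 2"
    and "is_dual A B C D K L M N"
  shows "dist A C = dist K M \<and> dist B D = dist L N"
proof -
  obtain u c d where adm: "admissible_roots A B C D u" and
    rel: "inner4 c (\<lambda>k. Re (u k)) = 0" "inner4 c (\<lambda>k. Im (u k)) = 0"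
      "inner4 d (\<lambda>k. Re (u k)) = 0" "inner4 d (\<lambda>k. Im (u k)) = 0"
      "inner4 c c = 1" "inner4 d d = 1" "inner4 c d = 0"
    and w: "L - K = (Complex (c 1) (d 1))\<^sup>2" "M - L = (Complex (c 2) (d 2))\<^sup>2"
      "N - M = (Complex (c 3) (d 3))\<^sup>2" "K - N = (Complex (c 4) (d 4))\<^sup>2"
    using assms(3) unfolding is_dual_def Let_def by blast
  define a where "a k = Re (u k)" for k
  define b where "b k = Im (u k)" for k
  have uab: "u k = Complex (a k) (b k)" for k by (simp add: a_def b_def)
  have s4: "(\<Sum>k\<in>{1..4::nat}. f k) = f 1 + f 2 + f 3 + f 4" for f :: "nat \<Rightarrow> real"
    by (simp add: numeral_eq_Suc)
  have sq: "\<And>k. k \<in> {1..4} \<Longrightarrow> (u k)\<^sup>2 = qedge A B C D k" using adm unfolding admissible_roots_def by blast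
  have z1: "B - A = (Complex (a 1) (b 1))^2" using sq[of 1] by (simp add: qedge_def uab)
  have z2: "C - B = (Complex (a 2) (b 2))^2" using sq[of 2] by (simp add: qedge_def uab)
  have z3: "D - C = (Complex (a 3) (b 3))^2" using sq[of 3] by (simp add: qedge_def uab)
  have z4: "A - D = (Complex (a 4) (b 4))^2" using sq[of 4] by (simp add: qedge_def uab)
  have nz: "cmod ((Complex x y)^2) = x^2 + y^2" for x y
    by (simp only: norm_power cm2) simp
  have per: "cmod (B - A) + cmod (C - B) + cmod (D - C) + cmod (A - D) = 2"
    using assms(2) unfolding perimeter_def s4 by (simp add: qedge_def)
  hence P: "(a 1^2 + b 1^2) + (a 2^2 + b 2^2) + (a 3^2 + b 3^2) + (a 4^2 + b 4^2) = 2"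
    unfolding z1 z2 z3 z4 nz .
  have "(B - A) + (C - B) + (D - C) + (A - D) = 0" by simp
  hence Z: "(Complex (a 1) (b 1))^2 + (Complex (a 2) (b 2))^2 + (Complex (a 3) (b 3))^2 + (Complex (a 4) (b 4))^2 = 0"
    unfolding z1 z2 z3 z4 .
  have R: "(a 1^2 - b 1^2) + (a 2^2 - b 2^2) + (a 3^2 - b 3^2) + (a 4^2 - b 4^2) = 0"
    using arg_cong[OF Z, of Re] by (simp add: power2_eq_square)
  have I: "a 1 * b 1 + a 2 * b 2 + a 3 * b 3 + a 4 * b 4 = 0"
    using arg_cong[OF Z, of Im] by (simp add: power2_eq_square algebra_simps)
  have aa: "a 1^2 + a 2^2 + a 3^2 + a 4^2 = 1" using P R by linarith
  have bb: "b 1^2 + b 2^2 + b 3^2 + b 4^2 = 1" using P R by linarith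
  define MM where "MM k j = (if j = 1 then a k else if j = 2 then b k else if j = 3 then c k else d k)" for k j :: nat
  have cols: "(\<Sum>k\<in>{1..4}. MM k i * MM k j) = (if i = j then 1 else 0)"
    if "i \<in> {1..4}" "j \<in> {1..4}" for i j
  proof -
    have all: "\<forall>i\<in>{1..4::nat}. P i" if "P 1" "P 2" "P 3" "P 4" for P
      using that by (auto simp: numeral_eq_Suc le_Suc_eq)
    have "\<forall>i\<in>{1..4::nat}. \<forall>j\<in>{1..4::nat}. (\<Sum>k\<in>{1..4}. MM k i * MM k j) = (if i = j then 1 else 0)"
      using rel aa bb I unfolding inner4_def s4 a_def[symmetric] b_def[symmetric]
      by (intro all ballI) (simp_all add: MM_def power2_eq_square algebra_simps)
    thus ?thesis using that by blast
  qed
  have rw: "(\<Sum>k\<in>{1..4}. MM i k * MM j k) = (if i = j then 1 else 0)"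
    if "i \<in> {1..4}" "j \<in> {1..4}" for i j
    using rows[of MM, OF cols that] by blast
  have r: "a i^2+b i^2+c i^2+d i^2 = 1" if "i \<in> {1..4}" for i
    using rw[OF that that, unfolded s4] by (simp add: MM_def power2_eq_square)
  have r2: "a i * a j + b i * b j + c i * c j + d i * d j = 0" if "i \<in> {1..4}" "j \<in> {1..4}" "i \<noteq> j" for i j
    using rw[OF that(1,2), unfolded s4] that(3) by (simp add: MM_def)
  have AC: "C - A = (Complex (a 1) (b 1))^2 + (Complex (a 2) (b 2))^2"
    using z1 z2 by (metis add.commute diff_add_cancel add_diff_eq)
  have KM: "M - K = (Complex (c 1) (d 1))^2 + (Complex (c 2) (d 2))^2"
    using w by (metis add.commute diff_add_cancel add_diff_eq)
  have BD: "D - B = (Complex (a 2) (b 2))^2 + (Complex (a 3) (b 3))^2"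
    using z2 z3 by (metis add.commute diff_add_cancel add_diff_eq)
  have LN: "N - L = (Complex (c 2) (d 2))^2 + (Complex (c 3) (d 3))^2"
    using w by (metis add.commute diff_add_cancel add_diff_eq)
  have "cmod (C - A) = cmod (M - K)" unfolding AC KM
    by (rule key) (use r r2 in auto)
  moreover have "cmod (D - B) = cmod (N - L)" unfolding BD LN
    by (rule key) (use r r2 in auto)
  ultimately show ?thesis by (metis dist_norm norm_minus_commute)
qed

end
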